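(* Let $M,N$ be sharp, integral monoids, $\Gamma$ an $M$-metrised graph, $f:M\to N$ a monoid homomorphism, and $\Gamma'$ the edge contraction of $\Gamma$ along $f$. Then $\operatorname{dgon}(\Gamma')\le\operatorname{dgon}(\Gamma)$.
   Context: Monoids are commutative, sharp (only unit $0$), integral (cancellative), with groupification; $\langle m\rangle=\{km:k\in\mathbb Z\}$ and for $x=km$, $m\ne0$, $x/m:=k$. A graph is $(X,r,i)$, $X$ finite, $r$ idempotent, $i$ an involution, $i(x)=x\iff r(x)=x$; vertices $V$ = fixed points, half-edges $H=X\setminus V$, edges $\{e,i(e)\}$ joining $r(e),r(i(e))$, $H_v=\{e\in H:r(e)=v\}$; graphs are connected. An $M$-metrised graph adds $l:X\to M$ with $l(i(x))=l(x)$, $l(x)=0\iff x\in V$. Divisors: free abelian group on $V$, pointwise order; $\operatorname{Div}^k_+$ = effective divisors of degree $k$. $\operatorname{PL}(\Gamma)=\{g:V\to M^{gp}: g(r(e))-g(r(i(e)))\in\langle l(e)\rangle\ \forall e\in H\}$; $\Delta(g)=\sum_{v}\big(\sum_{e\in H_v}\frac{g(v)-g(r(i(e)))}{l(e)}\big)[v]$; $D\sim D'$ iff $D-D'\in\Delta(\operatorname{PL}(\Gamma))$; $|D|=\{E\ge0:E\sim D\}$; $r(D)=\max\{k\in\mathbb Z:|D-F|\ne\emptyset\ \forall F\in\operatorname{Div}^k_+(\Gamma)\}$; $\operatorname{dgon}(\Gamma)=\min\{\deg D: r(D)\ge1\}$. The edge contraction of $\Gamma$ along $f$ is the $N$-metrised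 graph obtained as the quotient of $X$ by the equivalence relation generated by $e\sim r(e)\sim i(e)\sim r(i(e))$ for every $e\in H$ with $f(l(e))=0$, with induced $r,i$ and length $f\circ l$. *)

theory Defs
  imports Main
begin

(* A commutative integral monoid is represented as a submonoid M of an abelian group;
   its groupification is the subgroup {a - b | a, b in M}. *)

definition sharp_integral_monoid :: "'a::ab_group_add set \<Rightarrow> bool" where
  "sharp_integral_monoid M \<longleftrightarrow>
     0 \<in> M \<and> (\<forall>a\<in>M. \<forall>b\<in>M. a + b \<in> M) \<and> (\<forall>a\<in>M. - a \<in> M \<longrightarrow> a = 0)"

definition gp :: "'a::ab_group_add set \<Rightarrow> 'a set" where
  "gp M = {a - b | a b. a \<in> M \<and> b \<in> M}"

definition monoid_hom :: "'a::ab_group_add set \<Rightarrow> 'b::ab_group_add set \<Rightarrow> ('a \<Rightarrow> 'b) \<Rightarrow> bool" where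
  "monoid_hom M N f \<longleftrightarrow> f ` M \<subseteq> N \<and> f 0 = 0 \<and> (\<forall>a\<in>M. \<forall>b\<in>M. f (a + b) = f a + f b)"

definition zsmult :: "int \<Rightarrow> 'a::ab_group_add \<Rightarrow> 'a" where
  "zsmult k m = (if 0 \<le> k then ((plus m) ^^ nat k) 0 else - (((plus m) ^^ nat (- k)) 0))"

definition zspan :: "'a::ab_group_add \<Rightarrow> 'a set" where
  "zspan m = range (\<lambda>k. zsmult k m)"

definition zdiv :: "'a::ab_group_add \<Rightarrow> 'a \<Rightarrow> int" where
  "zdiv x m = (THE k. x = zsmult k m)"

definition vertices :: "'x set \<Rightarrow> ('x \<Rightarrow> 'x) \<Rightarrow> 'x set" where
  "vertices X r = {x \<in> X. r x = x}"

definition halfedges :: "'x set \<Rightarrow> ('x \<Rightarrow> 'x) \<Rightarrow> 'x set" where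
  "halfedges X r = X - vertices X r"

definition halfedges_at :: "'x set \<Rightarrow> ('x \<Rightarrow> 'x) \<Rightarrow> 'x \<Rightarrow> 'x set" where
  "halfedges_at X r v = {e \<in> halfedges X r. r e = v}"

definition adjacency :: "'x set \<Rightarrow> ('x \<Rightarrow> 'x) \<Rightarrow> ('x \<Rightarrow> 'x) \<Rightarrow> ('x \<times> 'x) set" where
  "adjacency X r i = {(r e, r (i e)) | e. e \<in> halfedges X r}"

definition is_graph :: "'x set \<Rightarrow> ('x \<Rightarrow> 'x) \<Rightarrow> ('x \<Rightarrow> 'x) \<Rightarrow> bool" where
  "is_graph X r i \<longleftrightarrow>
     finite X \<and> r ` X \<subseteq> X \<and> i ` X \<subseteq> X \<and>
     (\<forall>x\<in>X. r (r x) = r x) \<and> (\<forall>x\<in>X. i (i x) = x) \<and>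
     (\<forall>x\<in>X. i x = x \<longleftrightarrow> r x = x) \<and>
     vertices X r \<noteq> {} \<and>
     (\<forall>u\<in>vertices X r. \<forall>w\<in>vertices X r. (u, w) \<in> (adjacency X r i)\<^sup>*)"

definition metrised_graph ::
  "'a::ab_group_add set \<Rightarrow> 'x set \<Rightarrow> ('x \<Rightarrow> 'x) \<Rightarrow> ('x \<Rightarrow> 'x) \<Rightarrow> ('x \<Rightarrow> 'a) \<Rightarrow> bool" where
  "metrised_graph M X r i l \<longleftrightarrow> is_graph X r i \<and>
     (\<forall>x\<in>X. l x \<in> M \<and> l (i x) = l x \<and> (l x = 0 \<longleftrightarrow> x \<in> vertices X r))"

definition divisors :: "'x set \<Rightarrow> ('x \<Rightarrow> 'x) \<Rightarrow> ('x \<Rightarrow> int) set" where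
  "divisors X r = {D. \<forall>x. x \<notin> vertices X r \<longrightarrow> D x = 0}"

definition deg :: "'x set \<Rightarrow> ('x \<Rightarrow> 'x) \<Rightarrow> ('x \<Rightarrow> int) \<Rightarrow> int" where
  "deg X r D = sum D (vertices X r)"

definition eff_divisors :: "'x set \<Rightarrow> ('x \<Rightarrow> 'x) \<Rightarrow> int \<Rightarrow> ('x \<Rightarrow> int) set" where
  "eff_divisors X r k = {D \<in> divisors X r. (\<forall>x. 0 \<le> D x) \<and> deg X r D = k}"

definition PL ::
  "'a::ab_group_add set \<Rightarrow> 'x set \<Rightarrow> ('x \<Rightarrow> 'x) \<Rightarrow> ('x \<Rightarrow> 'x) \<Rightarrow> ('x \<Rightarrow> 'a) \<Rightarrow> ('x \<Rightarrow> 'a) set" where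
  "PL M X r i l = {g. (\<forall>v\<in>vertices X r. g v \<in> gp M) \<and> (\<forall>x. x \<notin> vertices X r \<longrightarrow> g x = 0) \<and>
       (\<forall>e\<in>halfedges X r. g (r e) - g (r (i e)) \<in> zspan (l e))}"

definition laplacian ::
  "'x set \<Rightarrow> ('x \<Rightarrow> 'x) \<Rightarrow> ('x \<Rightarrow> 'x) \<Rightarrow> ('x \<Rightarrow> 'a::ab_group_add) \<Rightarrow> ('x \<Rightarrow> 'a) \<Rightarrow> ('x \<Rightarrow> int)" where
  "laplacian X r i l g = (\<lambda>v. if v \<in> vertices X r
      then (\<Sum>e\<in>halfedges_at X r v. zdiv (g v - g (r (i e))) (l e)) else 0)"

definition lin_equiv ::
  "'a::ab_group_add set \<Rightarrow> 'x set \<Rightarrow> ('x \<Rightarrow> 'x) \<Rightarrow> ('x \<Rightarrow> 'x) \<Rightarrow> ('x \<Rightarrow> 'a)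
    \<Rightarrow> ('x \<Rightarrow> int) \<Rightarrow> ('x \<Rightarrow> int) \<Rightarrow> bool" where
  "lin_equiv M X r i l D D' \<longleftrightarrow> D \<in> divisors X r \<and> D' \<in> divisors X r \<and>
     (\<exists>g\<in>PL M X r i l. D - D' = laplacian X r i l g)"

definition linsys ::
  "'a::ab_group_add set \<Rightarrow> 'x set \<Rightarrow> ('x \<Rightarrow> 'x) \<Rightarrow> ('x \<Rightarrow> 'x) \<Rightarrow> ('x \<Rightarrow> 'a)
    \<Rightarrow> ('x \<Rightarrow> int) \<Rightarrow> ('x \<Rightarrow> int) set" where
  "linsys M X r i l D = {E \<in> divisors X r. (\<forall>x. 0 \<le> E x) \<and> lin_equiv M X r i l E D}"

definition rank ::
  "'a::ab_group_add set \<Rightarrow> 'x set \<Rightarrow> ('x \<Rightarrow> 'x) \<Rightarrow> ('x \<Rightarrow> 'x) \<Rightarrow> ('x \<Rightarrow> 'a)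
    \<Rightarrow> ('x \<Rightarrow> int) \<Rightarrow> int" where
  "rank M X r i l D = (GREATEST k::int. \<forall>F\<in>eff_divisors X r k. linsys M X r i l (D - F) \<noteq> {})"

definition dgon ::
  "'a::ab_group_add set \<Rightarrow> 'x set \<Rightarrow> ('x \<Rightarrow> 'x) \<Rightarrow> ('x \<Rightarrow> 'x) \<Rightarrow> ('x \<Rightarrow> 'a) \<Rightarrow> int" where
  "dgon M X r i l = (LEAST d::int. \<exists>D\<in>divisors X r. deg X r D = d \<and> 1 \<le> rank M X r i l D)"

definition contr_rel ::
  "('a \<Rightarrow> 'b::zero) \<Rightarrow> 'x set \<Rightarrow> ('x \<Rightarrow> 'x) \<Rightarrow> ('x \<Rightarrow> 'x) \<Rightarrow> ('x \<Rightarrow> 'a) \<Rightarrow> ('x \<times> 'x) set" where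
  "contr_rel f X r i l =
     (let B = {(e, y) | e y. e \<in> halfedges X r \<and> f (l e) = 0 \<and> y \<in> {r e, i e, r (i e)}}
      in Id_on X \<union> (B \<union> B\<inverse>)\<^sup>+)"

definition contr_X :: "('a \<Rightarrow> 'b::zero) \<Rightarrow> 'x set \<Rightarrow> ('x \<Rightarrow> 'x) \<Rightarrow> ('x \<Rightarrow> 'x) \<Rightarrow> ('x \<Rightarrow> 'a) \<Rightarrow> 'x set set" where
  "contr_X f X r i l = X // contr_rel f X r i l"

definition contr_r :: "('a \<Rightarrow> 'b::zero) \<Rightarrow> 'x set \<Rightarrow> ('x \<Rightarrow> 'x) \<Rightarrow> ('x \<Rightarrow> 'x) \<Rightarrow> ('x \<Rightarrow> 'a) \<Rightarrow> 'x set \<Rightarrow> 'x set" where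
  "contr_r f X r i l C = contr_rel f X r i l `` (r ` C)"

definition contr_i :: "('a \<Rightarrow> 'b::zero) \<Rightarrow> 'x set \<Rightarrow> ('x \<Rightarrow> 'x) \<Rightarrow> ('x \<Rightarrow> 'x) \<Rightarrow> ('x \<Rightarrow> 'a) \<Rightarrow> 'x set \<Rightarrow> 'x set" where
  "contr_i f X r i l C = contr_rel f X r i l `` (i ` C)"

definition contr_l :: "('a \<Rightarrow> 'b::zero) \<Rightarrow> 'x set \<Rightarrow> ('x \<Rightarrow> 'x) \<Rightarrow> ('x \<Rightarrow> 'x) \<Rightarrow> ('x \<Rightarrow> 'a) \<Rightarrow> 'x set \<Rightarrow> 'b" where
  "contr_l f X r i l C = f (l (SOME x. x \<in> C))"

end

theory Submission
  imports Defs
begin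


definition rep :: "nat \<Rightarrow> 'a::ab_group_add \<Rightarrow> 'a" where
  "rep n m = ((plus m) ^^ n) 0"

lemma rep_0[simp]: "rep 0 m = 0" by (simp add: rep_def)
lemma rep_Suc: "rep (Suc n) m = m + rep n m" by (simp add: rep_def)

lemma rep_add: "rep (a + b) m = rep a m + rep b m"
  by (induction a) (simp_all add: rep_Suc add.assoc)

lemma rep_zero[simp]: "rep n (0::'a::ab_group_add) = 0"
  by (induction n) (simp_all add: rep_Suc)

lemma zsmult_rep: "zsmult k m = rep (nat k) m - rep (nat (- k)) m"
  by (simp add: zsmult_def rep_def)

lemma zsmult_diff: "zsmult (int p - int q) m = rep p m - rep q m"
proof -
  have e: "nat (int p - int q) + q = p + nat (- (int p - int q))" by simp
  have "rep (nat (int p - int q)) m + rep q m = rep p m + rep (nat (- (int p - int q))) m"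
    using arg_cong[OF e, of "\<lambda>n. rep n m"] by (simp add: rep_add)
  then show ?thesis unfolding zsmult_rep by (simp add: algebra_simps)
qed

lemma int_split: "k = int (nat k) - int (nat (- k))" by simp

lemma zsmult_add: "zsmult a m + zsmult b m = zsmult (a + b) m"
proof -
  have "a + b = int (nat a + nat b) - int (nat (-a) + nat (-b))" by simp
  then have "zsmult (a+b) m = rep (nat a + nat b) m - rep (nat (-a) + nat (-b)) m"
    using zsmult_diff by metis
  then show ?thesis unfolding zsmult_rep by (simp add: rep_add algebra_simps)
qed

lemma zsmult_neg: "zsmult (- a) m = - zsmult a m"
  unfolding zsmult_rep by simp

lemma zsmult_0[simp]: "zsmult 0 m = 0" by (simp add: zsmult_def)
lemma zsmult_1[simp]: "zsmult 1 m = m" by (simp add: zsmult_def)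
lemma zsmult_zero[simp]: "zsmult k (0::'a::ab_group_add) = 0" by (simp add: zsmult_rep)

lemma zsmult_sub: "zsmult a m - zsmult b m = zsmult (a - b) m"
  using zsmult_add[of a m "-b"] zsmult_neg[of b m] by simp

definition tfree :: "'a::ab_group_add \<Rightarrow> bool" where
  "tfree m \<longleftrightarrow> (\<forall>k. zsmult k m = 0 \<longrightarrow> k = 0)"

lemma tfree_nz: "tfree m \<Longrightarrow> m \<noteq> 0"
  unfolding tfree_def using zsmult_1 by (metis one_neq_zero zsmult_zero)

lemma zdiv_eq: assumes "tfree m" shows "zdiv (zsmult k m) m = k"
  unfolding zdiv_def
proof (rule the_equality)
  fix j assume "zsmult k m = zsmult j m"
  then have "zsmult (k - j) m = 0" using zsmult_sub[of k m j] by simp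
  then show "j = k" using assms unfolding tfree_def by auto
qed simp

lemma rep_in: assumes "sharp_integral_monoid M" "m \<in> M" shows "rep n m \<in> M"
  using assms by (induction n) (auto simp: rep_Suc sharp_integral_monoid_def)

lemma sharp_tfree: assumes "sharp_integral_monoid M" "m \<in> M" "m \<noteq> 0" shows "tfree m"
  unfolding tfree_def
proof (intro allI impI)
  fix k assume z: "zsmult k m = 0"
  have key: "rep n m \<noteq> 0" if "n > 0" for n
  proof
    assume "rep n m = 0"
    moreover obtain n' where "n = Suc n'" using \<open>n>0\<close> gr0_implies_Suc by blast
    ultimately have "m + rep n' m = 0" by (simp add: rep_Suc)
    then have "- m = rep n' m" by (simp add: add_eq_0_iff)
    then have "- m \<in> M" using rep_in assms by metis
    then show False using assms unfolding sharp_integral_monoid_def by auto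
  qed
  show "k = 0"
  proof (rule ccontr)
    assume "k \<noteq> 0"
    then have "rep (nat \<bar>k\<bar>) m \<noteq> 0" using key by simp
    moreover have "rep (nat \<bar>k\<bar>) m = zsmult k m \<or> rep (nat \<bar>k\<bar>) m = - zsmult k m"
      unfolding zsmult_rep by (cases "k \<ge> 0") auto
    ultimately show False using z by auto
  qed
qed

lemma hom_rep: assumes "monoid_hom M N f" "sharp_integral_monoid M" "m \<in> M"
  shows "f (rep n m) = rep n (f m)"
  using assms
proof (induction n)
  case (Suc n)
  have "rep n m \<in> M" using rep_in Suc by metis
  then show ?case using Suc by (simp add: rep_Suc monoid_hom_def)
qed (simp add: monoid_hom_def)

definition Fext :: "'a::ab_group_add set \<Rightarrow> ('a \<Rightarrow> 'b::ab_group_add) \<Rightarrow> 'a \<Rightarrow> 'b" where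
  "Fext M f x = (SOME y. \<exists>a\<in>M. \<exists>b\<in>M. x = a - b \<and> y = f a - f b)"

lemma Fext_eq: assumes "monoid_hom M N f" "a \<in> M" "b \<in> M"
  shows "Fext M f (a - b) = f a - f b"
proof -
  have "\<exists>a'\<in>M. \<exists>b'\<in>M. a - b = a' - b' \<and> Fext M f (a - b) = f a' - f b'"
    unfolding Fext_def by (rule someI_ex) (use assms in blast)
  then obtain a' b' where ab: "a' \<in> M" "b' \<in> M" "a - b = a' - b'" "Fext M f (a - b) = f a' - f b'"
    by blast
  have "a + b' = a' + b" using ab(3) by (simp add: algebra_simps)
  then have "f (a + b') = f (a' + b)" by simp
  then have "f a + f b' = f a' + f b" using assms ab unfolding monoid_hom_def by auto
  then have eq: "f a + f b' = f a' + f b" .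
  have "f a - f b = (f a + f b') - f b - f b'" by simp
  also have "\<dots> = (f a' + f b) - f b - f b'" using eq by simp
  also have "\<dots> = f a' - f b'" by simp
  finally show ?thesis using ab(4) by simp
qed

lemma Fext_M: assumes "monoid_hom M N f" "a \<in> M" "sharp_integral_monoid M"
  shows "Fext M f a = f a"
proof -
  have "0 \<in> M" using assms(3) sharp_integral_monoid_def by auto
  from Fext_eq[OF assms(1) assms(2) this] show ?thesis using assms(1) monoid_hom_def by auto
qed

lemma Fext_sub: assumes "monoid_hom M N f" "x \<in> gp M" "y \<in> gp M" "sharp_integral_monoid M"
  shows "Fext M f (x - y) = Fext M f x - Fext M f y"
proof -
  obtain a b c d where abcd: "a\<in>M" "b\<in>M" "c\<in>M" "d\<in>M" and xy: "x = a - b" "y = c - d"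
    using assms unfolding gp_def by blast
  have eq: "x - y = (a + d) - (b + c)" using xy by (simp add: algebra_simps)
  have ad: "a + d \<in> M" "b + c \<in> M" using abcd assms(4)
    unfolding sharp_integral_monoid_def by auto
  have e1: "Fext M f (x - y) = f (a + d) - f (b + c)"
    unfolding eq by (rule Fext_eq[OF assms(1) ad])
  have e2: "Fext M f x = f a - f b" "Fext M f y = f c - f d"
    using Fext_eq[OF assms(1)] xy abcd by auto
  have e3: "f (a + d) = f a + f d" "f (b + c) = f b + f c"
    using assms(1) abcd unfolding monoid_hom_def by auto
  have "Fext M f (x - y) = (f a + f d) - (f b + f c)" using e1 e3 by simp
  also have "\<dots> = (f a - f b) - (f c - f d)" by (simp add: algebra_simps)
  finally show ?thesis using e2 by simp
qed

lemma Fext_gp: assumes "monoid_hom M N f" "x \<in> gp M" shows "Fext M f x \<in> gp N"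
proof -
  obtain a b where "a\<in>M" "b\<in>M" "x = a - b" using assms unfolding gp_def by blast
  then have "Fext M f x = f a - f b" using Fext_eq[OF assms(1)] by simp
  moreover have "f a \<in> N" "f b \<in> N" using assms(1) \<open>a\<in>M\<close> \<open>b\<in>M\<close> unfolding monoid_hom_def by auto
  ultimately show ?thesis unfolding gp_def by blast
qed

lemma Fext_zsmult: assumes "monoid_hom M N f" "m \<in> M" "sharp_integral_monoid M"
  shows "Fext M f (zsmult k m) = zsmult k (f m)"
proof -
  have "Fext M f (zsmult k m) = f (rep (nat k) m) - f (rep (nat (-k)) m)"
    unfolding zsmult_rep by (rule Fext_eq[OF assms(1) rep_in[OF assms(3,2)] rep_in[OF assms(3,2)]])
  then show ?thesis using hom_rep[OF assms(1,3,2)] by (simp add: zsmult_rep)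
qed



definition good :: "'x set \<Rightarrow> ('x \<Rightarrow> 'x) \<Rightarrow> ('x \<Rightarrow> 'x) \<Rightarrow> ('x \<Rightarrow> 'a::ab_group_add) \<Rightarrow> bool" where
  "good X r i l \<longleftrightarrow> finite X \<and> vertices X r \<noteq> {} \<and>
    (\<forall>e\<in>halfedges X r. r e \<in> vertices X r \<and> i e \<in> halfedges X r \<and> i (i e) = e \<and>
        l (i e) = l e \<and> tfree (l e))"

lemma sum_inv_zero:
  assumes "finite T" "\<And>e. e \<in> T \<Longrightarrow> i e \<in> T \<and> i (i e) = e \<and> \<phi> (i e) = - (\<phi> e :: int)"
  shows "sum \<phi> T = 0"
proof -
  have "bij_betw i T T"
    by (rule bij_betw_byWitness[where f'=i]) (use assms in auto)
  then have "sum (\<lambda>e. \<phi> (i e)) T = sum \<phi> T" by (rule sum.reindex_bij_betw)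
  moreover have "sum (\<lambda>e. \<phi> (i e)) T = - sum \<phi> T"
    using assms(2) by (simp add: sum_negf[symmetric])
  ultimately show ?thesis by simp
qed

lemma PL_k: assumes "g \<in> PL M X r i l" "e \<in> halfedges X r"
  shows "\<exists>k. g (r e) - g (r (i e)) = zsmult k (l e)"
  using assms unfolding PL_def zspan_def by auto

lemma good_fin: "good X r i l \<Longrightarrow> finite (vertices X r) \<and> finite (halfedges X r)"
  unfolding good_def vertices_def halfedges_def by auto

lemma deg_lap: assumes gd: "good X r i l" and g: "g \<in> PL M X r i l"
  shows "deg X r (laplacian X r i l g) = 0"
proof -
  let ?V = "vertices X r" and ?H = "halfedges X r"
  define \<phi> where "\<phi> e = zdiv (g (r e) - g (r (i e))) (l e)" for e
  have fin: "finite ?V" "finite ?H" using good_fin[OF gd] by auto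
  have "deg X r (laplacian X r i l g) = (\<Sum>v\<in>?V. \<Sum>e\<in>{x. x \<in> ?H \<and> r x = v}. \<phi> e)"
    unfolding deg_def
  proof (rule sum.cong[OF refl])
    fix v assume v: "v \<in> ?V"
    have "laplacian X r i l g v = (\<Sum>e\<in>halfedges_at X r v. zdiv (g v - g (r (i e))) (l e))"
      unfolding laplacian_def using v by (simp only: if_True)
    also have "\<dots> = (\<Sum>e\<in>{x. x \<in> ?H \<and> r x = v}. \<phi> e)"
      unfolding halfedges_at_def \<phi>_def by (rule sum.cong) auto
    finally show "laplacian X r i l g v = (\<Sum>e\<in>{x. x \<in> ?H \<and> r x = v}. \<phi> e)" .
  qed
  also have "\<dots> = sum \<phi> ?H"
    by (rule sum.group) (use fin gd in \<open>auto simp: good_def\<close>)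
  also have "\<dots> = 0"
  proof (rule sum_inv_zero[OF fin(2)])
    fix e assume e: "e \<in> ?H"
    obtain k where k: "g (r e) - g (r (i e)) = zsmult k (l e)" using PL_k[OF g e] by blast
    have props: "i e \<in> ?H" "i (i e) = e" "l (i e) = l e" "tfree (l e)" using gd e unfolding good_def by auto
    have "\<phi> e = k" unfolding \<phi>_def k using zdiv_eq[OF props(4)] by simp
    moreover have "g (r (i e)) - g (r (i (i e))) = zsmult (-k) (l (i e))"
      unfolding props(2,3) zsmult_neg k[symmetric] by (simp add: minus_diff_eq)
    then have "\<phi> (i e) = - k" unfolding \<phi>_def using zdiv_eq[OF props(4)] props(3) by simp
    ultimately show "i e \<in> ?H \<and> i (i e) = e \<and> \<phi> (i e) = - \<phi> e" using props by simp
  qed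
  finally show ?thesis .
qed

lemma deg_diff: "deg X r (A - B) = deg X r A - deg X r B"
  unfolding deg_def by (simp add: sum_subtractf)

lemma deg_add: "deg X r (\<lambda>x. A x + B x) = deg X r A + deg X r B"
  unfolding deg_def by (simp add: sum.distrib)

lemma linsys_deg: assumes "good X r i l" "E \<in> linsys M X r i l D"
  shows "deg X r E = deg X r D"
proof -
  obtain g where "g \<in> PL M X r i l" "E - D = laplacian X r i l g"
    using assms(2) unfolding linsys_def lin_equiv_def by auto
  then have "deg X r (E - D) = 0" using deg_lap[OF assms(1)] by simp
  then show ?thesis by (simp add: deg_diff)
qed

lemma deg_nonneg: "(\<And>x. 0 \<le> E x) \<Longrightarrow> 0 \<le> deg X r E"
  unfolding deg_def by (simp add: sum_nonneg)

definition ptk :: "'x \<Rightarrow> int \<Rightarrow> 'x \<Rightarrow> int" where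
  "ptk v k = (\<lambda>x. if x = v then k else 0)"

lemma ptk_eff: assumes "good X r i l" "v \<in> vertices X r" "0 \<le> k"
  shows "ptk v k \<in> eff_divisors X r k"
  using assms good_fin[OF assms(1)]
  unfolding eff_divisors_def divisors_def deg_def ptk_def by auto

definition Q :: "'a::ab_group_add set \<Rightarrow> 'x set \<Rightarrow> ('x \<Rightarrow> 'x) \<Rightarrow> ('x \<Rightarrow> 'x) \<Rightarrow> ('x \<Rightarrow> 'a)
    \<Rightarrow> ('x \<Rightarrow> int) \<Rightarrow> int \<Rightarrow> bool" where
  "Q M X r i l D k \<longleftrightarrow> (\<forall>F\<in>eff_divisors X r k. linsys M X r i l (D - F) \<noteq> {})"

lemma Q_bound: assumes gd: "good X r i l" "Q M X r i l D k" shows "k \<le> max (deg X r D) 0"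
proof (rule ccontr)
  assume "\<not> ?thesis"
  then have k: "k > 0" "k > deg X r D" by auto
  obtain v where v: "v \<in> vertices X r" using gd unfolding good_def by auto
  have "ptk v k \<in> eff_divisors X r k" using ptk_eff[OF gd(1) v] k by simp
  then obtain E where E: "E \<in> linsys M X r i l (D - ptk v k)" using assms(2) unfolding Q_def by auto
  have "deg X r E = deg X r D - deg X r (ptk v k)" using linsys_deg[OF gd(1) E] deg_diff by metis
  moreover have "deg X r (ptk v k) = k" using \<open>ptk v k \<in> eff_divisors X r k\<close> unfolding eff_divisors_def by simp
  moreover have "0 \<le> deg X r E" using E unfolding linsys_def by (auto intro: deg_nonneg)
  ultimately show False using k by simp
qed

lemma Q_neg: "Q M X r i l D (-1)"
  unfolding Q_def
proof
  fix F assume "F \<in> eff_divisors X r (-1)"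
  then have "\<And>x. 0 \<le> F x" "deg X r F = -1" unfolding eff_divisors_def by auto
  then show "linsys M X r i l (D - F) \<noteq> {}" using deg_nonneg[of F X r] by simp
qed

lemma Q_down: assumes gd: "good X r i l" and D: "D \<in> divisors X r" and q: "Q M X r i l D k"
  shows "Q M X r i l D (k - 1)"
  unfolding Q_def
proof
  fix F assume F: "F \<in> eff_divisors X r (k - 1)"
  obtain v where v: "v \<in> vertices X r" using gd unfolding good_def by auto
  have p1: "ptk v 1 \<in> eff_divisors X r 1" using ptk_eff[OF gd v] by simp
  have "(\<lambda>x. F x + ptk v 1 x) \<in> eff_divisors X r k"
    using F p1 unfolding eff_divisors_def divisors_def by (auto simp: deg_add)
  then obtain E where E: "E \<in> linsys M X r i l (D - (\<lambda>x. F x + ptk v 1 x))" using q unfolding Q_def by blast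
  obtain g where g: "g \<in> PL M X r i l" "E - (D - (\<lambda>x. F x + ptk v 1 x)) = laplacian X r i l g"
    using E unfolding linsys_def lin_equiv_def by blast
  have eqf: "(\<lambda>x. E x + ptk v 1 x) - (D - F) = E - (D - (\<lambda>x. F x + ptk v 1 x))"
    by (auto simp: fun_diff_def algebra_simps)
  have "(\<lambda>x. E x + ptk v 1 x) \<in> linsys M X r i l (D - F)"
    using E p1 F D g eqf unfolding linsys_def lin_equiv_def eff_divisors_def divisors_def
    by (auto simp: add_nonneg_nonneg)
  then show "linsys M X r i l (D - F) \<noteq> {}" by blast
qed

lemma int_greatest: fixes P :: "int \<Rightarrow> bool"
  assumes "P x" "\<And>y. P y \<Longrightarrow> y \<le> b"
  shows "P (Greatest P) \<and> (\<forall>y. P y \<longrightarrow> y \<le> Greatest P)"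
proof -
  let ?S = "{y. P y \<and> x \<le> y}"
  have fin: "finite ?S" by (rule finite_subset[of _ "{x..b}"]) (use assms in auto)
  have ne: "x \<in> ?S" using assms by auto
  let ?m = "Max ?S"
  have m: "P ?m" using Max_in[OF fin] ne by blast
  have ub: "\<forall>y. P y \<longrightarrow> y \<le> ?m"
  proof (intro allI impI)
    fix y assume "P y"
    show "y \<le> ?m"
    proof (cases "x \<le> y")
      case True then show ?thesis using Max_ge[OF fin] \<open>P y\<close> by auto
    next
      case False then show ?thesis using Max_ge[OF fin ne] by auto
    qed
  qed
  have "Greatest P = ?m" by (rule Greatest_equality) (use m ub in auto)
  then show ?thesis using m ub by simp
qed

lemma int_least: fixes P :: "int \<Rightarrow> bool"
  assumes "P x" "\<And>y. P y \<Longrightarrow> b \<le> y"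
  shows "P (Least P) \<and> (\<forall>y. P y \<longrightarrow> Least P \<le> y)"
proof -
  let ?S = "{y. P y \<and> y \<le> x}"
  have fin: "finite ?S" by (rule finite_subset[of _ "{b..x}"]) (use assms in auto)
  have ne: "x \<in> ?S" using assms by auto
  let ?m = "Min ?S"
  have m: "P ?m" using Min_in[OF fin] ne by blast
  have ub: "\<forall>y. P y \<longrightarrow> ?m \<le> y"
  proof (intro allI impI)
    fix y assume "P y"
    show "?m \<le> y"
    proof (cases "y \<le> x")
      case True then show ?thesis using Min_le[OF fin] \<open>P y\<close> by auto
    next
      case False then show ?thesis using Min_le[OF fin ne] by auto
    qed
  qed
  have "Least P = ?m" by (rule Least_equality) (use m ub in auto)
  then show ?thesis using m ub by simp
qed

lemma Q_down_n: assumes "good X r i l" "D \<in> divisors X r" "Q M X r i l D k"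
  shows "Q M X r i l D (k - int n)"
proof (induction n)
  case (Suc n)
  then show ?case using Q_down[OF assms(1,2) Suc] by (simp add: algebra_simps)
qed (use assms in simp)

lemma rank_iff: assumes gd: "good X r i l" and D: "D \<in> divisors X r"
  shows "1 \<le> rank M X r i l D \<longleftrightarrow> Q M X r i l D 1"
proof -
  have rk: "rank M X r i l D = Greatest (Q M X r i l D)"
    unfolding rank_def Q_def by simp
  have G: "Q M X r i l D (Greatest (Q M X r i l D)) \<and>
      (\<forall>y. Q M X r i l D y \<longrightarrow> y \<le> Greatest (Q M X r i l D))"
    by (rule int_greatest[of "Q M X r i l D" "-1" "max (deg X r D) 0", OF Q_neg Q_bound[OF gd]])
  show ?thesis
  proof
    assume "1 \<le> rank M X r i l D"
    then have "Q M X r i l D (Greatest (Q M X r i l D) - int (nat (Greatest (Q M X r i l D) - 1)))"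
      using Q_down_n[OF gd D] G by blast
    then show "Q M X r i l D 1" using \<open>1 \<le> rank M X r i l D\<close> rk by simp
  next
    assume "Q M X r i l D 1" then show "1 \<le> rank M X r i l D" using G rk by simp
  qed
qed

lemma rank_deg: assumes gd: "good X r i l" and D: "D \<in> divisors X r" and q: "Q M X r i l D 1"
  shows "1 \<le> deg X r D"
proof -
  obtain v where v: "v \<in> vertices X r" using gd unfolding good_def by auto
  have p1: "ptk v 1 \<in> eff_divisors X r 1" using ptk_eff[OF gd v] by simp
  then obtain E where E: "E \<in> linsys M X r i l (D - ptk v 1)" using q unfolding Q_def by blast
  have "deg X r E = deg X r D - 1" using linsys_deg[OF gd E] p1 deg_diff
    unfolding eff_divisors_def by (metis (mono_tags, lifting) mem_Collect_eq)
  moreover have "0 \<le> deg X r E" using E unfolding linsys_def by (auto intro: deg_nonneg)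
  ultimately show ?thesis by simp
qed

lemma lap_zero: assumes "good X r i l" shows "laplacian X r i l (\<lambda>_. 0::'a::ab_group_add) = (\<lambda>_. 0)"
proof -
  have "zdiv (0::'a) (l e) = 0" if "e \<in> halfedges X r" for e
    using zdiv_eq[of "l e" 0] assms that unfolding good_def by auto
  then show ?thesis unfolding laplacian_def halfedges_at_def by (auto intro!: ext sum.neutral)
qed

lemma Q_D0: assumes gd: "good X r i l" and M0: "0 \<in> M"
  shows "Q M X r i l (\<lambda>x. if x \<in> vertices X r then 1 else 0) 1"
  unfolding Q_def
proof
  let ?D0 = "\<lambda>x. if x \<in> vertices X r then 1 else (0::int)"
  fix F assume F: "F \<in> eff_divisors X r 1"
  have Fle: "F x \<le> 1" for x
  proof (cases "x \<in> vertices X r")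
    case True
    then have "F x \<le> sum F (vertices X r)"
      using F good_fin[OF gd] by (intro member_le_sum) (auto simp: eff_divisors_def)
    then show ?thesis using F unfolding eff_divisors_def deg_def by simp
  next
    case False then show ?thesis using F unfolding eff_divisors_def divisors_def by auto
  qed
  have PL0: "(\<lambda>_. 0) \<in> PL M X r i l"
    unfolding PL_def gp_def zspan_def using M0 by (auto intro!: range_eqI[of _ _ 0])
  have Ddiv: "?D0 - F \<in> divisors X r" using F unfolding eff_divisors_def divisors_def by (auto simp: fun_diff_def)
  have nn: "\<forall>x. 0 \<le> (?D0 - F) x"
    using Fle F unfolding eff_divisors_def divisors_def by auto
  have eq0: "?D0 - F - (?D0 - F) = laplacian X r i l (\<lambda>_. 0)" using lap_zero[OF gd] by (auto simp: fun_diff_def)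
  have "?D0 - F \<in> linsys M X r i l (?D0 - F)"
    unfolding linsys_def lin_equiv_def using Ddiv nn PL0 eq0 by blast
  then show "linsys M X r i l (?D0 - F) \<noteq> {}" by blast
qed

lemma dgon_lb: assumes gd: "good X r i l"
  shows "\<And>y. (\<exists>D\<in>divisors X r. deg X r D = y \<and> 1 \<le> rank M X r i l D) \<Longrightarrow> 1 \<le> y"
proof -
  fix y assume "\<exists>D\<in>divisors X r. deg X r D = y \<and> 1 \<le> rank M X r i l D"
  then obtain D where D: "D \<in> divisors X r" "deg X r D = y" "1 \<le> rank M X r i l D" by blast
  have "Q M X r i l D 1" using rank_iff[OF gd D(1)] D(3) by simp
  from rank_deg[OF gd D(1) this] D(2) show "1 \<le> y" by simp
qed

lemma dgon_exists: assumes gd: "good X r i l" and M0: "0 \<in> M"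
  shows "\<exists>D\<in>divisors X r. deg X r D = dgon M X r i l \<and> 1 \<le> rank M X r i l D"
proof -
  let ?P = "\<lambda>d. \<exists>D\<in>divisors X r. deg X r D = d \<and> 1 \<le> rank M X r i l D"
  let ?D0 = "\<lambda>x. if x \<in> vertices X r then 1 else (0::int)"
  have D0: "?D0 \<in> divisors X r" unfolding divisors_def by auto
  have "1 \<le> rank M X r i l ?D0" using rank_iff[OF gd D0] Q_D0[OF gd M0] by simp
  then have p0: "?P (deg X r ?D0)" using D0 by blast
  have "?P (Least ?P)" using int_least[of ?P _ 1, OF p0 dgon_lb[OF gd]] by (rule conjunct1)
  then show ?thesis unfolding dgon_def by simp
qed

lemma dgon_le: assumes gd: "good X r i l" and D: "D \<in> divisors X r" and q: "Q M X r i l D 1"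
  shows "dgon M X r i l \<le> deg X r D"
proof -
  let ?P = "\<lambda>d. \<exists>D\<in>divisors X r. deg X r D = d \<and> 1 \<le> rank M X r i l D"
  have "1 \<le> rank M X r i l D" using rank_iff[OF gd D] q by simp
  then have p0: "?P (deg X r D)" using D by blast
  have "\<forall>y. ?P y \<longrightarrow> Least ?P \<le> y" using int_least[of ?P _ 1, OF p0 dgon_lb[OF gd]] by (rule conjunct2)
  then have "Least ?P \<le> deg X r D" using p0 by blast
  then show ?thesis unfolding dgon_def by simp
qed



locale contr =
  fixes M :: "'a::ab_group_add set" and N :: "'b::ab_group_add set" and X :: "'x set"
    and r i :: "'x \<Rightarrow> 'x" and l :: "'x \<Rightarrow> 'a" and f :: "'a \<Rightarrow> 'b"
  assumes sM: "sharp_integral_monoid M" and sN: "sharp_integral_monoid N"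
    and mg: "metrised_graph M X r i l" and hom: "monoid_hom M N f"
begin

abbreviation "V \<equiv> vertices X r"
abbreviation "H \<equiv> halfedges X r"
abbreviation "R \<equiv> contr_rel f X r i l"
abbreviation "X' \<equiv> contr_X f X r i l"
abbreviation "r' \<equiv> contr_r f X r i l"
abbreviation "i' \<equiv> contr_i f X r i l"
abbreviation "l' \<equiv> contr_l f X r i l"
abbreviation "V' \<equiv> vertices X' r'"
abbreviation "H' \<equiv> halfedges X' r'"

definition Bs :: "('x \<times> 'x) set" where
  "Bs = {(e, y) | e y. e \<in> H \<and> f (l e) = 0 \<and> y \<in> {r e, i e, r (i e)}}"
definition Sc :: "'x set" where "Sc = V \<union> {e \<in> H. f (l e) = 0}"
definition Uc :: "'x set" where "Uc = {e \<in> H. f (l e) \<noteq> 0}"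
definition cls :: "'x \<Rightarrow> 'x set" where "cls x = R `` {x}"

lemma R_def: "R = Id_on X \<union> (Bs \<union> Bs\<inverse>)\<^sup>+"
  unfolding contr_rel_def Bs_def Let_def by simp

lemma mgp: "finite X" "r ` X \<subseteq> X" "i ` X \<subseteq> X" "\<forall>x\<in>X. r (r x) = r x"
  "\<forall>x\<in>X. i (i x) = x" "\<forall>x\<in>X. i x = x \<longleftrightarrow> r x = x" "V \<noteq> {}"
  "\<forall>x\<in>X. l x \<in> M \<and> l (i x) = l x \<and> (l x = 0 \<longleftrightarrow> x \<in> V)"
  using mg by (simp_all add: metrised_graph_def is_graph_def)

lemma gx: assumes "x \<in> X"
  shows "r x \<in> X" "i x \<in> X" "r (r x) = r x" "i (i x) = x" "i x = x \<longleftrightarrow> r x = x"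
    "l x \<in> M" "l (i x) = l x" "l x = 0 \<longleftrightarrow> x \<in> V"
  using assms mgp(2-6,8) by auto

lemma finX: "finite X" and Vne: "V \<noteq> {}"
  using mgp by auto

lemma he: assumes "e \<in> H"
  shows "e \<in> X" "r e \<noteq> e" "r e \<in> V" "i e \<in> H" "r (i e) \<in> V" "i (i e) = e" "l (i e) = l e"
    "l e \<in> M" "l e \<noteq> 0"
proof -
  have eX: "e \<in> X" "r e \<noteq> e" using assms unfolding halfedges_def vertices_def by auto
  then show "e \<in> X" "r e \<noteq> e" by auto
  show "r e \<in> V" using gx[OF eX(1)] unfolding vertices_def by auto
  have "i e \<noteq> e" using gx[OF eX(1)] eX by auto
  then have "r (i e) \<noteq> i e" using gx[OF gx(2)[OF eX(1)]] gx[OF eX(1)] by metis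
  then show ie: "i e \<in> H" using gx[OF eX(1)] unfolding halfedges_def vertices_def by auto
  show "r (i e) \<in> V" using gx[OF gx(2)[OF eX(1)]] unfolding vertices_def by auto
  show "i (i e) = e" "l (i e) = l e" "l e \<in> M" using gx[OF eX(1)] by auto
  show "l e \<noteq> 0" using gx[OF eX(1)] assms unfolding halfedges_def by auto
qed

lemma VX: "V \<subseteq> X" unfolding vertices_def by auto
lemma SX: "Sc \<subseteq> X" unfolding Sc_def vertices_def halfedges_def by auto
lemma X_SU: "x \<in> X \<Longrightarrow> x \<in> Sc \<or> x \<in> Uc"
  unfolding Sc_def Uc_def halfedges_def by auto
lemma U_not_S: "x \<in> Uc \<Longrightarrow> x \<notin> Sc"
  unfolding Sc_def Uc_def halfedges_def by auto
lemma UH: "x \<in> Uc \<Longrightarrow> x \<in> H" unfolding Uc_def by auto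

lemma f0: "f 0 = 0" using hom unfolding monoid_hom_def by auto

lemma S_fl: assumes "x \<in> Sc" shows "f (l x) = 0"
proof (cases "x \<in> V")
  case True
  then have "l x = 0" using gx(8)[of x] VX by auto
  then show ?thesis using f0 by simp
next
  case False then show ?thesis using assms unfolding Sc_def by auto
qed

lemma B_S: "Bs \<union> Bs\<inverse> \<subseteq> Sc \<times> Sc"
proof -
  have "Bs \<subseteq> Sc \<times> Sc"
  proof
    fix p assume "p \<in> Bs"
    then obtain e y where p: "p = (e, y)" "e \<in> H" "f (l e) = 0" "y \<in> {r e, i e, r (i e)}"
      unfolding Bs_def by blast
    have "i e \<in> Sc" using he[OF p(2)] p(3) unfolding Sc_def by auto
    then show "p \<in> Sc \<times> Sc" using p he[OF p(2)] unfolding Sc_def by auto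
  qed
  then show ?thesis by auto
qed

lemma R_cases: assumes "(x, y) \<in> R" shows "x \<in> X" "y \<in> X" "x = y \<or> x \<in> Sc \<and> y \<in> Sc"
proof -
  have "(Bs \<union> Bs\<inverse>)\<^sup>+ \<subseteq> Sc \<times> Sc" by (rule trancl_subset_Sigma[OF B_S])
  then show "x \<in> X" "y \<in> X" "x = y \<or> x \<in> Sc \<and> y \<in> Sc" using assms SX unfolding R_def by auto
qed

lemma R_refl: "x \<in> X \<Longrightarrow> (x, x) \<in> R" unfolding R_def by auto

lemma R_sym: assumes "(x, y) \<in> R" shows "(y, x) \<in> R"
proof -
  have "sym ((Bs \<union> Bs\<inverse>)\<^sup>+)" by (rule sym_trancl) (auto simp: sym_def)
  then show ?thesis using assms unfolding R_def sym_def by auto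
qed

lemma R_trans: assumes "(x, y) \<in> R" "(y, z) \<in> R" shows "(x, z) \<in> R"
  using assms unfolding R_def by (auto intro: trancl_trans)

lemma R_B: "(a, b) \<in> Bs \<Longrightarrow> (a, b) \<in> R" unfolding R_def by auto

lemma S_r: assumes "x \<in> Sc" shows "(x, r x) \<in> R"
proof (cases "x \<in> V")
  case True then show ?thesis using R_refl unfolding vertices_def by auto
next
  case False then have "x \<in> H" "f (l x) = 0" using assms unfolding Sc_def by auto
  then show ?thesis by (intro R_B) (auto simp: Bs_def)
qed

lemma S_i: assumes "x \<in> Sc" shows "(x, i x) \<in> R"
proof (cases "x \<in> V")
  case True
  then have "x \<in> X" "r x = x" unfolding vertices_def by auto
  then have "i x = x" using gx(5) by blast
  then show ?thesis using R_refl \<open>x \<in> X\<close> by simp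
next
  case False then have "x \<in> H" "f (l x) = 0" using assms unfolding Sc_def by auto
  then show ?thesis by (intro R_B) (auto simp: Bs_def)
qed

lemma R_r: assumes "(x, y) \<in> R" shows "(r x, r y) \<in> R"
proof -
  note c = R_cases[OF assms]
  show ?thesis
  proof (cases "x = y")
    case True then show ?thesis using R_refl gx c by auto
  next
    case False then have "x \<in> Sc" "y \<in> Sc" using c by auto
    then show ?thesis using S_r R_sym R_trans assms by meson
  qed
qed

lemma R_i: assumes "(x, y) \<in> R" shows "(i x, i y) \<in> R"
proof -
  note c = R_cases[OF assms]
  show ?thesis
  proof (cases "x = y")
    case True then show ?thesis using R_refl gx c by auto
  next
    case False then have "x \<in> Sc" "y \<in> Sc" using c by auto
    then show ?thesis using S_i R_sym R_trans assms by meson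
  qed
qed

lemma cls_mem: "x \<in> X \<Longrightarrow> x \<in> cls x" unfolding cls_def using R_refl by auto

lemma cls_eq: "(x, y) \<in> R \<Longrightarrow> cls x = cls y"
  unfolding cls_def using R_sym R_trans by blast

lemma cls_eq_iff: "x \<in> X \<Longrightarrow> y \<in> X \<Longrightarrow> cls x = cls y \<longleftrightarrow> (x, y) \<in> R"
  using cls_eq cls_mem unfolding cls_def by blast

lemma cls_U: assumes "e \<in> Uc" shows "cls e = {e}"
proof -
  have "e \<in> X" using UH[OF assms] he by auto
  moreover have "(e, y) \<in> R \<Longrightarrow> y = e" for y using R_cases U_not_S[OF assms] by blast
  ultimately show ?thesis using cls_mem unfolding cls_def by blast
qed

lemma X'_eq: "X' = cls ` X"
  unfolding contr_X_def quotient_def cls_def by auto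

lemma r'_cls: assumes "x \<in> X" shows "r' (cls x) = cls (r x)"
  unfolding contr_r_def cls_def
proof
  show "R `` (r ` (R `` {x})) \<subseteq> R `` {r x}" using R_r R_trans by blast
  show "R `` {r x} \<subseteq> R `` (r ` (R `` {x}))" using R_refl[OF assms] by blast
qed

lemma i'_cls: assumes "x \<in> X" shows "i' (cls x) = cls (i x)"
  unfolding contr_i_def cls_def
proof
  show "R `` (i ` (R `` {x})) \<subseteq> R `` {i x}" using R_i R_trans by blast
  show "R `` {i x} \<subseteq> R `` (i ` (R `` {x}))" using R_refl[OF assms] by blast
qed

lemma V'_cls: assumes "x \<in> X" shows "cls x \<in> V' \<longleftrightarrow> x \<in> Sc"
proof
  assume "x \<in> Sc"
  then have "cls (r x) = cls x" using cls_eq[OF S_r] by metis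
  then show "cls x \<in> V'" using r'_cls[OF assms] X'_eq assms unfolding vertices_def by auto
next
  assume a: "cls x \<in> V'"
  show "x \<in> Sc"
  proof (rule ccontr)
    assume "x \<notin> Sc"
    then have u: "x \<in> Uc" using X_SU assms by auto
    have "cls (r x) = {x}" using a r'_cls[OF assms] cls_U[OF u] unfolding vertices_def by auto
    then have "r x = x" using cls_mem[OF gx(1)[OF assms]] by auto
    then show False using he(2)[OF UH[OF u]] by simp
  qed
qed

lemma X'_cases: assumes "C \<in> X'" obtains x where "x \<in> X" "C = cls x"
  using assms X'_eq by auto

lemma V'_ex: assumes "C \<in> V'" shows "\<exists>v\<in>V. cls v = C"
proof -
  obtain x where x: "x \<in> X" "C = cls x" using assms X'_cases unfolding vertices_def by blast
  then have s: "x \<in> Sc" using V'_cls assms by auto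
  have "r x \<in> V" using gx[OF x(1)] unfolding vertices_def by auto
  moreover have "cls (r x) = C" using cls_eq[OF S_r[OF s]] x by simp
  ultimately show ?thesis by blast
qed

lemma H'_eq: "H' = cls ` Uc"
proof
  show "H' \<subseteq> cls ` Uc"
  proof
    fix C assume "C \<in> H'"
    then have C: "C \<in> X'" "C \<notin> V'" unfolding halfedges_def by auto
    then obtain x where x: "x \<in> X" "C = cls x" using X'_cases by blast
    then have "x \<in> Uc" using V'_cls C X_SU by auto
    then show "C \<in> cls ` Uc" using x by auto
  qed
  show "cls ` Uc \<subseteq> H'"
  proof
    fix C assume "C \<in> cls ` Uc"
    then obtain e where e: "e \<in> Uc" "C = cls e" by auto
    have eX: "e \<in> X" using he UH e by auto
    then have "C \<notin> V'" using V'_cls U_not_S e by auto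
    then show "C \<in> H'" using e eX X'_eq unfolding halfedges_def by auto
  qed
qed

lemma l'_U: assumes "e \<in> Uc" shows "l' (cls e) = f (l e)"
  unfolding contr_l_def cls_U[OF assms] by simp

lemma iU: "e \<in> Uc \<Longrightarrow> i e \<in> Uc"
  using he unfolding Uc_def by auto

lemma good_G: "good X r i l"
  unfolding good_def using finX Vne he sharp_tfree[OF sM] by auto

lemma good_G': "good X' r' i' l'"
  unfolding good_def
proof (intro conjI ballI)
  show "finite X'" using X'_eq finX by simp
  obtain v where "v \<in> V" using Vne by auto
  then have "cls v \<in> V'" using V'_cls VX unfolding Sc_def by auto
  then show "V' \<noteq> {}" by auto
  fix C assume "C \<in> H'"
  then obtain e where e: "e \<in> Uc" "C = cls e" using H'_eq by auto
  have eH: "e \<in> H" using UH e by auto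
  have eX: "e \<in> X" using he eH by auto
  show "r' C \<in> V'" using e r'_cls[OF eX] V'_cls he[OF eH] VX unfolding Sc_def by auto
  show "i' C \<in> H'" using e i'_cls[OF eX] H'_eq iU by auto
  have ieX: "i e \<in> X" using he(1)[OF he(4)[OF eH]] .
  show "i' (i' C) = C" using e i'_cls[OF eX] i'_cls[OF ieX] he(6)[OF eH] by simp
  show "l' (i' C) = l' C" using e i'_cls[OF eX] l'_U iU he[OF eH] by auto
  have "f (l e) \<in> N" "f (l e) \<noteq> 0" using hom he[OF eH] e unfolding monoid_hom_def Uc_def by auto
  then show "tfree (l' C)" using e l'_U sharp_tfree[OF sN] by auto
qed

end



context contr
begin

definition push :: "('x \<Rightarrow> int) \<Rightarrow> 'x set \<Rightarrow> int" where
  "push D = (\<lambda>C. if C \<in> V' then sum D {v \<in> V. cls v = C} else 0)"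

lemma finV': "finite V'"
  using good_G' good_fin by blast

lemma finV: "finite V" using finX VX finite_subset by blast

lemma clsV: "v \<in> V \<Longrightarrow> cls v \<in> V'"
  using V'_cls VX unfolding Sc_def by auto

lemma push_div: "push D \<in> divisors X' r'"
  unfolding push_def divisors_def by auto

lemma push_deg: "deg X' r' (push D) = deg X r D"
proof -
  have "deg X' r' (push D) = (\<Sum>C\<in>V'. sum D {v. v \<in> V \<and> cls v = C})"
    unfolding deg_def push_def by (rule sum.cong) auto
  also have "\<dots> = sum D V"
    by (rule sum.group) (use finV finV' clsV in auto)
  finally show ?thesis unfolding deg_def .
qed

lemma push_diff: "push (A - B) = push A - push B"
  unfolding push_def by (auto simp: fun_diff_def sum_subtractf)

lemma push_nonneg: "(\<And>x. 0 \<le> E x) \<Longrightarrow> 0 \<le> push E C"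
  unfolding push_def by (auto intro: sum_nonneg)

lemma lift: assumes F': "F' \<in> eff_divisors X' r' k"
  shows "\<exists>F\<in>eff_divisors X r k. push F = F'"
proof -
  define rp where "rp C = (SOME v. v \<in> V \<and> cls v = C)" for C
  have rp: "rp C \<in> V \<and> cls (rp C) = C" if "C \<in> V'" for C
    unfolding rp_def by (rule someI_ex) (use V'_ex[OF that] in blast)
  define F where "F v = (if v \<in> V \<and> v = rp (cls v) then F' (cls v) else 0)" for v
  have pF: "push F = F'"
  proof
    fix C show "push F C = F' C"
    proof (cases "C \<in> V'")
      case True
      have "sum F {v \<in> V. cls v = C} = (\<Sum>v\<in>{v \<in> V. cls v = C}. if v = rp C then F' C else 0)"
        unfolding F_def by (rule sum.cong) auto
      also have "\<dots> = F' C"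
        using rp[OF True] finV by (subst sum.delta) auto
      finally show ?thesis unfolding push_def using True by simp
    next
      case False then show ?thesis using F' unfolding push_def eff_divisors_def divisors_def by auto
    qed
  qed
  have "F \<in> divisors X r" unfolding F_def divisors_def by auto
  moreover have "\<forall>x. 0 \<le> F x" using F' unfolding F_def eff_divisors_def by auto
  moreover have "deg X r F = k" using push_deg[of F] pF F' unfolding eff_divisors_def by simp
  ultimately show ?thesis using pF unfolding eff_divisors_def by blast
qed

lemma PL_gp: "g \<in> PL M X r i l \<Longrightarrow> v \<in> V \<Longrightarrow> g v \<in> gp M"
  unfolding PL_def by auto

lemma rV: "x \<in> X \<Longrightarrow> r x \<in> V"
  using gx(1,3) unfolding vertices_def by auto

lemma Fext_diff_k: assumes g: "g \<in> PL M X r i l" and e: "e \<in> H"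
    and k: "g (r e) - g (r (i e)) = zsmult k (l e)"
  shows "Fext M f (g (r e)) - Fext M f (g (r (i e))) = zsmult k (f (l e))"
proof -
  have "Fext M f (g (r e)) - Fext M f (g (r (i e))) = Fext M f (g (r e) - g (r (i e)))"
    using Fext_sub[OF hom PL_gp[OF g he(3)[OF e]] PL_gp[OF g he(5)[OF e]] sM] by simp
  also have "\<dots> = zsmult k (f (l e))" unfolding k by (rule Fext_zsmult[OF hom he(8)[OF e] sM])
  finally show ?thesis .
qed

lemma hB: assumes g: "g \<in> PL M X r i l" and e: "e \<in> H" and fe: "f (l e) = 0"
  shows "Fext M f (g (r e)) = Fext M f (g (r (i e)))"
proof -
  obtain k where k: "g (r e) - g (r (i e)) = zsmult k (l e)" using PL_k[OF g e] by blast
  show ?thesis using Fext_diff_k[OF g e k] fe by simp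
qed

definition hh :: "('x \<Rightarrow> 'a) \<Rightarrow> 'x \<Rightarrow> 'b" where "hh g x = Fext M f (g (r x))"

lemma hh_B: assumes g: "g \<in> PL M X r i l" and ab: "(a, b) \<in> Bs" shows "hh g a = hh g b"
proof -
  obtain e y where p: "a = e" "b = y" "e \<in> H" "f (l e) = 0" "y \<in> {r e, i e, r (i e)}"
    using ab unfolding Bs_def by blast
  have eX: "e \<in> X" using he(1)[OF p(3)] .
  have ieX: "i e \<in> X" using he(1)[OF he(4)[OF p(3)]] .
  have "hh g (r e) = hh g e" "hh g (r (i e)) = hh g (i e)"
    unfolding hh_def using gx(3)[OF eX] gx(3)[OF ieX] by auto
  moreover have "hh g e = hh g (i e)" unfolding hh_def using hB[OF g p(3,4)] .
  ultimately show ?thesis using p by auto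
qed

lemma hh_R: assumes g: "g \<in> PL M X r i l" and xy: "(x, y) \<in> R" shows "hh g x = hh g y"
proof -
  have "hh g a = hh g b" if "(a, b) \<in> (Bs \<union> Bs\<inverse>)\<^sup>+" for a b
    using that
  proof (induction rule: trancl_induct)
    case (base b) then show ?case using hh_B[OF g] by auto
  next
    case (step b c) then show ?case using hh_B[OF g] by auto
  qed
  then show ?thesis using xy unfolding R_def by auto
qed

definition gpush :: "('x \<Rightarrow> 'a) \<Rightarrow> 'x set \<Rightarrow> 'b" where
  "gpush g C = (if C \<in> V' then hh g (SOME x. x \<in> C) else 0)"

lemma gpush_cls: assumes g: "g \<in> PL M X r i l" and x: "x \<in> X" and C: "cls x \<in> V'"
  shows "gpush g (cls x) = hh g x"
proof -
  have "(SOME y. y \<in> cls x) \<in> cls x" by (rule someI[of _ x]) (rule cls_mem[OF x])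
  then have "(x, SOME y. y \<in> cls x) \<in> R" unfolding cls_def by simp
  then show ?thesis unfolding gpush_def using C hh_R[OF g] by simp
qed

lemma hh_r: "x \<in> X \<Longrightarrow> hh g (r x) = Fext M f (g (r x))"
  unfolding hh_def using gx(3) by simp

lemma gpush_PL: assumes g: "g \<in> PL M X r i l" shows "gpush g \<in> PL N X' r' i' l'"
  unfolding PL_def
proof (intro CollectI conjI ballI allI impI)
  fix C assume C: "C \<in> V'"
  then obtain x where x: "x \<in> X" "C = cls x" using X'_cases unfolding vertices_def by blast
  have "gpush g C = Fext M f (g (r x))" using gpush_cls[OF g x(1)] C x unfolding hh_def by simp
  then show "gpush g C \<in> gp N" using Fext_gp[OF hom PL_gp[OF g rV[OF x(1)]]] by simp
next
  fix C assume "C \<notin> V'" then show "gpush g C = 0" unfolding gpush_def by simp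
next
  fix C assume "C \<in> H'"
  then obtain e where e: "e \<in> Uc" "C = cls e" using H'_eq by auto
  have eH: "e \<in> H" using UH[OF e(1)] .
  have eX: "e \<in> X" using he(1)[OF eH] .
  have ieX: "i e \<in> X" using he(1)[OF he(4)[OF eH]] .
  have r1: "r' C = cls (r e)" using r'_cls[OF eX] e by simp
  have r2: "r' (i' C) = cls (r (i e))" using i'_cls[OF eX] r'_cls[OF ieX] e by simp
  have v1: "gpush g (cls (r e)) = Fext M f (g (r e))"
    using gpush_cls[OF g gx(1)[OF eX] clsV[OF rV[OF eX]]] hh_r[OF eX] by simp
  have v2: "gpush g (cls (r (i e))) = Fext M f (g (r (i e)))"
    using gpush_cls[OF g gx(1)[OF ieX] clsV[OF rV[OF ieX]]] hh_r[OF ieX] by simp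
  obtain k where k: "g (r e) - g (r (i e)) = zsmult k (l e)" using PL_k[OF g eH] by blast
  have "gpush g (r' C) - gpush g (r' (i' C)) = zsmult k (f (l e))"
    unfolding r1 r2 v1 v2 by (rule Fext_diff_k[OF g eH k])
  then show "gpush g (r' C) - gpush g (r' (i' C)) \<in> zspan (l' C)"
    using l'_U[OF e(1)] e(2) unfolding zspan_def by auto
qed

lemma phi_inv: assumes g: "g \<in> PL M X r i l" and eH: "e \<in> H"
  shows "zdiv (g (r (i e)) - g (r (i (i e)))) (l (i e)) = - zdiv (g (r e) - g (r (i e))) (l e)"
proof -
  obtain k where k: "g (r e) - g (r (i e)) = zsmult k (l e)" using PL_k[OF g eH] by blast
  have tf: "tfree (l e)" using sharp_tfree[OF sM he(8,9)[OF eH]] .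
  have "g (r (i e)) - g (r (i (i e))) = zsmult (-k) (l (i e))"
    unfolding he(6,7)[OF eH] zsmult_neg k[symmetric] by (simp add: minus_diff_eq)
  then show ?thesis unfolding he(7)[OF eH] k using zdiv_eq[OF tf] by simp
qed

lemma lap_v: assumes v: "v \<in> V"
  shows "laplacian X r i l g v = (\<Sum>e\<in>{e \<in> H. r e = v}. zdiv (g (r e) - g (r (i e))) (l e))"
proof -
  have "laplacian X r i l g v = (\<Sum>e\<in>halfedges_at X r v. zdiv (g v - g (r (i e))) (l e))"
    unfolding laplacian_def using v by (simp only: if_True)
  also have "\<dots> = (\<Sum>e\<in>{e \<in> H. r e = v}. zdiv (g (r e) - g (r (i e))) (l e))"
    unfolding halfedges_at_def by (rule sum.cong) auto
  finally show ?thesis .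
qed

lemma lap_push: assumes g: "g \<in> PL M X r i l"
  shows "push (laplacian X r i l g) = laplacian X' r' i' l' (gpush g)"
proof
  fix C
  define \<phi> where "\<phi> e = zdiv (g (r e) - g (r (i e))) (l e)" for e
  show "push (laplacian X r i l g) C = laplacian X' r' i' l' (gpush g) C"
  proof (cases "C \<in> V'")
    case False then show ?thesis unfolding push_def laplacian_def by simp
  next
    case CV: True
    define SS where "SS = {e \<in> H. cls (r e) = C}"
    define SU where "SU = {e \<in> Uc. cls (r e) = C}"
    define SC where "SC = {e \<in> H. f (l e) = 0 \<and> cls (r e) = C}"
    have finH: "finite H" using good_fin[OF good_G] by simp
    have fSS: "finite SS" "finite SU" "finite SC"
      using finH unfolding SS_def SU_def SC_def Uc_def by auto
    have "push (laplacian X r i l g) C = (\<Sum>v\<in>{v \<in> V. cls v = C}. \<Sum>e\<in>{e \<in> H. r e = v}. \<phi> e)"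
      unfolding push_def \<phi>_def using CV by (simp add: lap_v)
    also have "\<dots> = (\<Sum>v\<in>{v \<in> V. cls v = C}. \<Sum>e\<in>{x. x \<in> SS \<and> r x = v}. \<phi> e)"
      by (rule sum.cong[OF refl], rule sum.cong) (auto simp: SS_def)
    also have "\<dots> = sum \<phi> SS"
      by (rule sum.group) (use fSS finV he in \<open>auto simp: SS_def\<close>)
    also have "SS = SU \<union> SC" unfolding SS_def SU_def SC_def Uc_def by auto
    also have "sum \<phi> (SU \<union> SC) = sum \<phi> SU + sum \<phi> SC"
      by (rule sum.union_disjoint) (use fSS in \<open>auto simp: SU_def SC_def Uc_def\<close>)
    also have "sum \<phi> SC = 0"
    proof (rule sum_inv_zero[OF fSS(3)])
      fix e assume e: "e \<in> SC"
      then have eH: "e \<in> H" and fe: "f (l e) = 0" and ce: "cls (r e) = C" unfolding SC_def by auto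
      have eS: "e \<in> Sc" "i e \<in> Sc" using eH fe he[OF eH] unfolding Sc_def by auto
      have "(r e, r (i e)) \<in> R" using S_r[OF eS(1)] S_i[OF eS(1)] S_r[OF eS(2)] R_sym R_trans by meson
      then have "cls (r (i e)) = C" using cls_eq ce by metis
      then have "i e \<in> SC" using he[OF eH] fe unfolding SC_def by auto
      moreover have "\<phi> (i e) = - \<phi> e" unfolding \<phi>_def using phi_inv[OF g eH] .
      ultimately show "i e \<in> SC \<and> i (i e) = e \<and> \<phi> (i e) = - \<phi> e" using he(6)[OF eH] by simp
    qed
    finally have L: "push (laplacian X r i l g) C = sum \<phi> SU" by simp
    have hC: "halfedges_at X' r' C = cls ` SU"
    proof
      show "halfedges_at X' r' C \<subseteq> cls ` SU"
      proof
        fix C' assume "C' \<in> halfedges_at X' r' C"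
        then have C': "C' \<in> H'" "r' C' = C" unfolding halfedges_at_def by auto
        then obtain e where e: "e \<in> Uc" "C' = cls e" using H'_eq by auto
        have "cls (r e) = C" using C' e r'_cls he(1)[OF UH[OF e(1)]] by simp
        then show "C' \<in> cls ` SU" using e unfolding SU_def by auto
      qed
      show "cls ` SU \<subseteq> halfedges_at X' r' C"
        using H'_eq r'_cls he(1)[OF UH] unfolding SU_def halfedges_at_def by auto
    qed
    have inj: "inj_on cls SU" using cls_U unfolding SU_def inj_on_def by auto
    have "laplacian X' r' i' l' (gpush g) C =
        (\<Sum>C'\<in>cls ` SU. zdiv (gpush g C - gpush g (r' (i' C'))) (l' C'))"
      unfolding laplacian_def using CV hC by simp
    also have "\<dots> = (\<Sum>e\<in>SU. zdiv (gpush g C - gpush g (r' (i' (cls e)))) (l' (cls e)))"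
      by (rule sum.reindex[OF inj, unfolded comp_def])
    also have "\<dots> = sum \<phi> SU"
    proof (rule sum.cong[OF refl])
      fix e assume "e \<in> SU"
      then have eU: "e \<in> Uc" and ce: "cls (r e) = C" unfolding SU_def by auto
      have eH: "e \<in> H" using UH[OF eU] .
      have eX: "e \<in> X" using he(1)[OF eH] .
      have ieX: "i e \<in> X" using he(1)[OF he(4)[OF eH]] .
      have r2: "r' (i' (cls e)) = cls (r (i e))" using i'_cls[OF eX] r'_cls[OF ieX] by simp
      have v1: "gpush g C = Fext M f (g (r e))"
        using gpush_cls[OF g gx(1)[OF eX] clsV[OF rV[OF eX]]] hh_r[OF eX] ce by simp
      have v2: "gpush g (cls (r (i e))) = Fext M f (g (r (i e)))"
        using gpush_cls[OF g gx(1)[OF ieX] clsV[OF rV[OF ieX]]] hh_r[OF ieX] by simp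
      obtain k where k: "g (r e) - g (r (i e)) = zsmult k (l e)" using PL_k[OF g eH] by blast
      have tf1: "tfree (l e)" using sharp_tfree[OF sM he(8,9)[OF eH]] .
      have "f (l e) \<in> N" "f (l e) \<noteq> 0" using hom he[OF eH] eU unfolding monoid_hom_def Uc_def by auto
      then have tf2: "tfree (f (l e))" using sharp_tfree[OF sN] by simp
      have "gpush g C - gpush g (r' (i' (cls e))) = zsmult k (f (l e))"
        unfolding r2 v1 v2 by (rule Fext_diff_k[OF g eH k])
      then have "zdiv (gpush g C - gpush g (r' (i' (cls e)))) (l' (cls e)) = k"
        using l'_U[OF eU] zdiv_eq[OF tf2] by simp
      moreover have "\<phi> e = k" unfolding \<phi>_def k using zdiv_eq[OF tf1] by simp
      ultimately show "zdiv (gpush g C - gpush g (r' (i' (cls e)))) (l' (cls e)) = \<phi> e" by simp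
    qed
    finally show ?thesis using L by simp
  qed
qed

lemma main: "dgon N X' r' i' l' \<le> dgon M X r i l"
proof -
  have M0: "0 \<in> M" using sM unfolding sharp_integral_monoid_def by simp
  obtain D where D: "D \<in> divisors X r" "deg X r D = dgon M X r i l" "1 \<le> rank M X r i l D"
    using dgon_exists[OF good_G M0] by blast
  have q: "Q M X r i l D 1" using rank_iff[OF good_G D(1)] D(3) by simp
  have q': "Q N X' r' i' l' (push D) 1"
    unfolding Q_def
  proof
    fix F' assume F': "F' \<in> eff_divisors X' r' 1"
    obtain F where F: "F \<in> eff_divisors X r 1" "push F = F'" using lift[OF F'] by blast
    obtain E where E: "E \<in> linsys M X r i l (D - F)" using q F(1) unfolding Q_def by blast
    then obtain g where Ed: "E \<in> divisors X r" "\<forall>x. 0 \<le> E x" "g \<in> PL M X r i l"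
        "E - (D - F) = laplacian X r i l g"
      unfolding linsys_def lin_equiv_def by blast
    have "push E - (push D - F') = push (E - (D - F))" using F(2) push_diff by simp
    also have "\<dots> = laplacian X' r' i' l' (gpush g)" using Ed(4) lap_push[OF Ed(3)] by simp
    finally have eqp: "push E - (push D - F') = laplacian X' r' i' l' (gpush g)" .
    have dF: "push D - F' \<in> divisors X' r'"
      using F' push_div[of D] unfolding eff_divisors_def divisors_def by auto
    have nnE: "\<forall>C. 0 \<le> push E C" using push_nonneg Ed(2) by blast
    have "push E \<in> linsys N X' r' i' l' (push D - F')"
      unfolding linsys_def lin_equiv_def
      using push_div[of E] nnE dF gpush_PL[OF Ed(3)] eqp by blast
    then show "linsys N X' r' i' l' (push D - F') \<noteq> {}" by blast
  qed
  have "dgon N X' r' i' l' \<le> deg X' r' (push D)" by (rule dgon_le[OF good_G' push_div q'])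
  then show ?thesis using push_deg D(2) by simp
qed

end


theorem corollary4p6:
  fixes M :: "'a::ab_group_add set" and N :: "'b::ab_group_add set"
    and X :: "'x set" and r i :: "'x \<Rightarrow> 'x" and l :: "'x \<Rightarrow> 'a" and f :: "'a \<Rightarrow> 'b"
  assumes "sharp_integral_monoid M" and "sharp_integral_monoid N"
    and "metrised_graph M X r i l"
    and "monoid_hom M N f"
  shows "dgon N (contr_X f X r i l) (contr_r f X r i l) (contr_i f X r i l) (contr_l f X r i l)
           \<le> dgon M X r i l"
proof -
  interpret contr M N X r i l f by unfold_locales (use assms in auto)
  show ?thesis by (rule main)
qed

end
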